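(* In the spectrum pricing game described in the context (with $m<l$), let $(\psi_1,\ldots,\psi_n)$ be any symmetric Nash equilibrium. Then for every state $i\in\{1,\ldots,n\}$, the distribution function $\psi_i$ is continuous, i.e. it has no atoms. In particular, the game has no pure-strategy symmetric Nash equilibrium.
   Context: Spectrum pricing game. There are $l\ge 2$ primaries and $m$ secondaries, $1\le m<l$; there are $n$ channel states $1,\ldots,n$, plus state $0$ meaning "unavailable". Each primary owns one channel, which independently of the others is in state $i\in\{1,\ldots,n\}$ with probability $q_i>0$ and in state $0$ with probability $1-q$, where $q=\sum_{i=1}^n q_i\in(0,1)$. For each state $i\ge1$ there is a penalty function $g_i$, continuous and strictly increasing in the price, with inverse $f_i$, also continuous and strictly increasing. Quoting price $p$ for a channel in state $i$ means the channel offers penalty $g_i(p)$; equivalently, choosing penalty $x$ in state $i$ means charging price $f_i(x)$. Higher states are better: $g_i(p)>g_j(p)$ for all $p$ and $f_i(x)<f_j(x)$ for all $x$ whenever $i<j$. There is a transition cost $c>0$ and a maximum acceptable penalty $v$ with $g_1(c)<v$. We assume that all points used below lie in the common domain of the $f_i$, and that for all $j<k$ and all $x>y>g_j(c)$, $$\frac{f_j(y)-c}{f_k(y)-c}<\frac{f_j(x)-c}{f_k(x)-c}. \qquad (\ast)$$ Each primary knows only its own channel state. A primary whose channel is in state $j\ge1$ draws its penalty from a distribution function $\psi_j$, independently of everything else. A primary in state $0$ offers penalty $v+1$, which is equivalent to not offering its channel. If $Y$ channels are offered with penalty at most $v$, the $\min(Y,m)$ channels with the lowest penalties are sold, with ties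 broken uniformly at random. A primary selling at price $p$ earns $p-c$; otherwise it earns $0$. Strategies and equilibrium. A symmetric strategy profile is one in which every primary uses the same $(\psi_1,\ldots,\psi_n)$. Given such a profile, let $r(x)$ be the probability that a given primary's channel offered at penalty $x$ is sold, and set $\phi_j(x)=(f_j(x)-c)\,r(x)$, the expected profit of choosing penalty $x$ in state $j$. A symmetric Nash equilibrium (NE) is a symmetric profile in which no primary, in any state $j$, can increase its expected profit by unilaterally replacing $\psi_j$ with any other distribution. A penalty $x$ is a best response in state $j$ if $\phi_j(x)=\sup_{y\in\mathbb{R}}\phi_j(y)=:u_{j,\max}$. *)

theory Defs
  imports "HOL-Probability.Probability"
begin

text \<open>A symmetric strategy profile is given by probability measures M j on the reals
  (j = 1..n); the distribution function psi_j is cdf (M j).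
  Each other primary's penalty is: v+1 with probability 1 - q (state 0), and
  drawn from M j with probability q j (state j).\<close>

definition qtot :: "nat \<Rightarrow> (nat \<Rightarrow> real) \<Rightarrow> real" where
  "qtot n q = (\<Sum>j\<in>{1..n}. q j)"

definition p_lt :: "nat \<Rightarrow> (nat \<Rightarrow> real) \<Rightarrow> real \<Rightarrow> (nat \<Rightarrow> real measure) \<Rightarrow> real \<Rightarrow> real" where
  "p_lt n q v M x = (if v + 1 < x then 1 - qtot n q else 0)
      + (\<Sum>j\<in>{1..n}. q j * measure (M j) {..<x})"

definition p_eq :: "nat \<Rightarrow> (nat \<Rightarrow> real) \<Rightarrow> real \<Rightarrow> (nat \<Rightarrow> real measure) \<Rightarrow> real \<Rightarrow> real" where
  "p_eq n q v M x = (if x = v + 1 then 1 - qtot n q else 0)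
      + (\<Sum>j\<in>{1..n}. q j * measure (M j) {x})"

text \<open>Sale probability of own channel at penalty x given a other channels
  strictly cheaper and b others tied at x (ties broken uniformly at random).\<close>
definition share :: "nat \<Rightarrow> nat \<Rightarrow> nat \<Rightarrow> real" where
  "share m a b = (if m \<le> a then 0 else min 1 (real (m - a) / real (b + 1)))"

text \<open>r(x): probability that a channel offered at penalty x is sold when the other
  l - 1 primaries play the symmetric profile M (multinomial over the numbers
  of other channels with lower / equal / higher penalty).\<close>
definition sell_prob :: "nat \<Rightarrow> nat \<Rightarrow> nat \<Rightarrow> (nat \<Rightarrow> real) \<Rightarrow> real
    \<Rightarrow> (nat \<Rightarrow> real measure) \<Rightarrow> real \<Rightarrow> real" where
  "sell_prob l m n q v M x =
     (if v < x then 0 else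
      (let pl = p_lt n q v M x; pe = p_eq n q v M x; pg = 1 - pl - pe in
       \<Sum>a\<in>{0..l-1}. \<Sum>b\<in>{0..l-1-a}.
         real ((l-1) choose a) * real ((l-1-a) choose b)
         * pl ^ a * pe ^ b * pg ^ (l-1-a-b) * share m a b))"

definition profit :: "nat \<Rightarrow> nat \<Rightarrow> nat \<Rightarrow> (nat \<Rightarrow> real) \<Rightarrow> (nat \<Rightarrow> real \<Rightarrow> real)
    \<Rightarrow> real \<Rightarrow> real \<Rightarrow> (nat \<Rightarrow> real measure) \<Rightarrow> nat \<Rightarrow> real \<Rightarrow> real" where
  "profit l m n q f c v M j x = (f j x - c) * sell_prob l m n q v M x"

definition sym_NE :: "nat \<Rightarrow> nat \<Rightarrow> nat \<Rightarrow> (nat \<Rightarrow> real) \<Rightarrow> (nat \<Rightarrow> real \<Rightarrow> real)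
    \<Rightarrow> real \<Rightarrow> real \<Rightarrow> (nat \<Rightarrow> real measure) \<Rightarrow> bool" where
  "sym_NE l m n q f c v M \<longleftrightarrow>
     (\<forall>j\<in>{1..n}. real_distribution (M j)
        \<and> integrable (M j) (profit l m n q f c v M j)
        \<and> (\<forall>M'. real_distribution M' \<and> integrable M' (profit l m n q f c v M j) \<longrightarrow>
              (\<integral>x. profit l m n q f c v M j x \<partial>M') \<le> (\<integral>x. profit l m n q f c v M j x \<partial>M j)))"

end

theory Submission imports Defs begin

definition GG :: "nat \<Rightarrow> nat \<Rightarrow> real \<Rightarrow> real \<Rightarrow> real \<Rightarrow> real" where
 "GG N m pl pe pg = (\<Sum>a\<in>{0..N}. \<Sum>b\<in>{0..N-a}.
         real (N choose a) * real ((N-a) choose b)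
         * pl ^ a * pe ^ b * pg ^ (N-a-b) * share m a b)"

lemma share_nonneg: "0 \<le> share m a b"
  by (simp add: share_def)

lemma share_le: "share m a b \<le> (if a < m then 1 else 0)"
  by (simp add: share_def)

lemma share_a0: "a < m \<Longrightarrow> share m a 0 = 1"
  by (simp add: share_def)

lemma GG_nonneg: "0 \<le> pl \<Longrightarrow> 0 \<le> pe \<Longrightarrow> 0 \<le> pg \<Longrightarrow> 0 \<le> GG N m pl pe pg"
  unfolding GG_def by (intro sum_nonneg mult_nonneg_nonneg) (auto simp: share_nonneg)

definition RR :: "nat \<Rightarrow> nat \<Rightarrow> real \<Rightarrow> real \<Rightarrow> real" where
 "RR N m pl s = (\<Sum>a\<in>{0..N}. real (N choose a) * pl ^ a * s ^ (N-a) * (if a < m then 1 else 0))"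

lemma GG_ge_pg: assumes "0 \<le> pl" "0 \<le> pe" "0 \<le> pg" "1 \<le> m"
  shows "pg ^ N \<le> GG N m pl pe pg"
proof -
  let ?t = "\<lambda>a b. real (N choose a) * real ((N-a) choose b)
         * pl ^ a * pe ^ b * pg ^ (N-a-b) * share m a b"
  have "pg ^ N = ?t 0 0" using assms by (simp add: share_a0)
  also have "\<dots> \<le> (\<Sum>b\<in>{0..N-0}. ?t 0 b)"
    by (rule member_le_sum) (use assms in \<open>auto intro!: mult_nonneg_nonneg simp: share_nonneg\<close>)
  also have "\<dots> \<le> (\<Sum>a\<in>{0..N}. \<Sum>b\<in>{0..N-a}. ?t a b)"
    by (rule member_le_sum[where f="\<lambda>a. \<Sum>b\<in>{0..N-a}. ?t a b"])
       (use assms in \<open>auto intro!: sum_nonneg mult_nonneg_nonneg simp: share_nonneg\<close>)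
  finally show ?thesis unfolding GG_def .
qed

lemma GG_zero_ge: assumes "0 \<le> pl" "0 \<le> s"
  shows "RR N m pl s \<le> GG N m pl 0 s"
  unfolding RR_def GG_def
proof (rule sum_mono)
  fix a assume a: "a \<in> {0..N}"
  let ?t = "\<lambda>b. real (N choose a) * real ((N-a) choose b)
         * pl ^ a * 0 ^ b * s ^ (N-a-b) * share m a b"
  have "real (N choose a) * pl ^ a * s ^ (N - a) * (if a < m then 1 else 0) = ?t 0"
    by (simp add: share_def)
  also have "\<dots> \<le> sum ?t {0..N-a}"
    by (rule member_le_sum) (use assms in \<open>auto intro!: mult_nonneg_nonneg simp: share_nonneg\<close>)
  finally show "real (N choose a) * pl ^ a * s ^ (N - a) * (if a < m then 1 else 0) \<le> sum ?t {0..N-a}" .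
qed

lemma GG_strict: assumes "0 \<le> pl" "0 < pe" "0 \<le> pg" "1 \<le> m" "m < Suc N"
  shows "GG N m pl pe pg < RR N m pl (pe + pg)"
proof -
  let ?t = "\<lambda>a b. real (N choose a) * real ((N-a) choose b)
         * pl ^ a * pe ^ b * pg ^ (N-a-b) * share m a b"
  let ?u = "\<lambda>a b. real (N choose a) * pl ^ a * (if a < m then 1 else 0) *
              (real ((N-a) choose b) * pe ^ b * pg ^ (N-a-b))"
  have tu: "?t a b \<le> ?u a b" for a b
  proof -
    have "?t a b = (real (N choose a) * pl ^ a) * (real ((N-a) choose b) * pe ^ b * pg ^ (N-a-b)) * share m a b"
      by (simp add: algebra_simps)
    also have "\<dots> \<le> (real (N choose a) * pl ^ a) * (real ((N-a) choose b) * pe ^ b * pg ^ (N-a-b)) * (if a < m then 1 else 0)"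
      by (rule mult_left_mono[OF share_le]) (use assms in \<open>auto intro!: mult_nonneg_nonneg\<close>)
    also have "\<dots> = ?u a b" by (simp add: algebra_simps)
    finally show ?thesis .
  qed
  have strict0: "?t 0 N < ?u 0 N"
  proof -
    have sh: "share m 0 N < 1" using assms
      by (simp add: share_def min_def field_simps)
    have "?t 0 N = pe ^ N * share m 0 N" by simp
    also have "\<dots> < pe ^ N * 1" using sh assms by (intro mult_strict_left_mono) auto
    also have "\<dots> = ?u 0 N" using assms by simp
    finally show ?thesis .
  qed
  have "GG N m pl pe pg = (\<Sum>a\<in>{0..N}. \<Sum>b\<in>{0..N-a}. ?t a b)" unfolding GG_def ..
  also have "\<dots> < (\<Sum>a\<in>{0..N}. \<Sum>b\<in>{0..N-a}. ?u a b)"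
  proof (rule sum_strict_mono_ex1)
    show "\<forall>a\<in>{0..N}. (\<Sum>b\<in>{0..N-a}. ?t a b) \<le> (\<Sum>b\<in>{0..N-a}. ?u a b)"
      using tu by (intro ballI sum_mono) blast
    have "(\<Sum>b\<in>{0..N-0}. ?t 0 b) < (\<Sum>b\<in>{0..N-0}. ?u 0 b)"
    proof (rule sum_strict_mono_ex1)
      show "\<forall>b\<in>{0..N-0}. ?t 0 b \<le> ?u 0 b" using tu by blast
      show "\<exists>b\<in>{0..N-0}. ?t 0 b < ?u 0 b" using strict0 by force
    qed auto
    then show "\<exists>a\<in>{0..N}. (\<Sum>b\<in>{0..N-a}. ?t a b) < (\<Sum>b\<in>{0..N-a}. ?u a b)"
      by (rule bexI[where x=0]) auto
  qed auto
  also have "\<dots> = RR N m pl (pe + pg)"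
    unfolding RR_def
  proof (rule sum.cong[OF refl])
    fix a assume "a \<in> {0..N}"
    have "(\<Sum>b\<in>{0..N-a}. ?u a b) = real (N choose a) * pl ^ a * (if a < m then 1 else 0) *
        (\<Sum>b\<in>{0..N-a}. real ((N-a) choose b) * pe ^ b * pg ^ (N-a-b))"
      by (simp add: sum_distrib_left)
    also have "(\<Sum>b\<in>{0..N-a}. real ((N-a) choose b) * pe ^ b * pg ^ (N-a-b)) = (pe+pg)^(N-a)"
      by (simp add: binomial_ring atLeast0AtMost diff_diff_add)
    finally show "(\<Sum>b\<in>{0..N-a}. ?u a b) = real (N choose a) * pl ^ a * (pe + pg) ^ (N - a) * (if a < m then 1 else 0)"
      by simp
  qed
  finally show ?thesis .
qed

lemma GG_tendsto:
  assumes "(a \<longlongrightarrow> A) F" "(b \<longlongrightarrow> B) F" "(d \<longlongrightarrow> D) F"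
  shows "((\<lambda>k. GG N m (a k) (b k) (d k)) \<longlongrightarrow> GG N m A B D) F"
  unfolding GG_def by (intro tendsto_intros assms)

lemma sell_prob_GG: "sell_prob l m n q v M y = (if v < y then 0 else
   GG (l-1) m (p_lt n q v M y) (p_eq n q v M y) (1 - p_lt n q v M y - p_eq n q v M y))"
  unfolding sell_prob_def GG_def Let_def by simp

lemma rd_split: assumes "real_distribution N"
  shows "measure N {..<y} + measure N {y} = cdf N y"
proof -
  interpret real_distribution N by fact
  have "{..<y} \<union> {y} = {..y}" by auto
  then show ?thesis unfolding cdf_def
    by (metis finite_measure_Union sets_M atMost_borel lessThan_borel borel_singleton
        sets.empty_sets Int_insert_right_if0 inf_bot_right lessThan_iff order_less_irrefl insert_is_Un
        sup_commute)
qed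

theorem theorem1:
  fixes l m n :: nat and q :: "nat \<Rightarrow> real" and f :: "nat \<Rightarrow> real \<Rightarrow> real"
    and c v :: real and M :: "nat \<Rightarrow> real measure"
  assumes "2 \<le> l" and "1 \<le> m" and "m < l"
    and "\<forall>i\<in>{1..n}. 0 < q i"
    and "0 < qtot n q" and "qtot n q < 1"
    and "\<forall>i\<in>{1..n}. continuous_on UNIV (f i) \<and> strict_mono (f i)"
    and "\<forall>i\<in>{1..n}. \<forall>j\<in>{1..n}. i < j \<longrightarrow> (\<forall>x. f i x < f j x)"
    and "0 < c"
    and "c < f 1 v"
    and "\<forall>j\<in>{1..n}. \<forall>k\<in>{1..n}. j < k \<longrightarrow> (\<forall>x y. y < x \<and> c < f j y \<longrightarrow>
           (f j y - c) / (f k y - c) < (f j x - c) / (f k x - c))"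
    and "sym_NE l m n q f c v M"
  shows "\<forall>i\<in>{1..n}. \<forall>x. isCont (cdf (M i)) x"
proof (intro ballI allI)
  fix i x assume i: "i \<in> {1..n}"
  note NE = assms(12)[unfolded sym_NE_def]
  have RD: "\<And>j. j\<in>{1..n} \<Longrightarrow> real_distribution (M j)" using NE by blast
  interpret Mi: real_distribution "M i" using RD i .
  define P where "P = profit l m n q f c v M i"
  define E where "E = (\<integral>z. P z \<partial>M i)"
  define PL where "PL = p_lt n q v M"
  define PE where "PE = p_eq n q v M"
  define S where "S = (\<lambda>y. \<Sum>j\<in>{1..n}. q j * cdf (M j) y)"
  define N where "N = l - 1"
  have qpos: "\<And>j. j \<in> {1..n} \<Longrightarrow> 0 < q j" using assms(4) by blast
  have qnn: "\<And>j. j \<in> {1..n} \<Longrightarrow> 0 \<le> q j" using qpos less_imp_le by blast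
  have intP: "integrable (M i) P" using NE i P_def by blast
  have NEi: "\<And>M'. real_distribution M' \<Longrightarrow> integrable M' P \<Longrightarrow> (\<integral>z. P z \<partial>M') \<le> E"
    using NE i unfolding P_def E_def by blast
  have Pmeas: "P \<in> borel_measurable borel"
    using borel_measurable_integrable[OF intP] measurable_cong_sets[OF Mi.events_eq_borel refl] by blast
  have le_E: "P y \<le> E" for y
  proof -
    let ?R = "return borel y"
    interpret R: prob_space ?R by (rule prob_space_return) simp
    have rdR: "real_distribution ?R" by unfold_locales simp
    have "integrable ?R (\<lambda>_. P y)" by simp
    then have "integrable ?R P"
      by (rule integrable_cong_AE_imp) (use Pmeas in \<open>auto simp: AE_return\<close>)
    from NEi[OF rdR this] show ?thesis using integral_return[of y borel P] Pmeas by simp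
  qed
  have sp: "\<And>y. sell_prob l m n q v M y = (if v < y then 0 else GG N m (PL y) (PE y) (1 - PL y - PE y))"
    unfolding sell_prob_GG PL_def PE_def N_def ..
  have PLy: "PL y = (\<Sum>j\<in>{1..n}. q j * measure (M j) {..<y})" if "y \<le> v" for y
    using that unfolding PL_def p_lt_def by simp
  have PEy: "PE y = (\<Sum>j\<in>{1..n}. q j * measure (M j) {y})" if "y \<le> v" for y
    using that unfolding PE_def p_eq_def by simp
  have PLPE: "PL y + PE y = S y" if "y \<le> v" for y
    unfolding PLy[OF that] PEy[OF that] S_def sum.distrib[symmetric]
    by (rule sum.cong[OF refl]) (simp add: distrib_left[symmetric] rd_split[OF RD])
  have PLnn: "0 \<le> PL y" if "y \<le> v" for y
    unfolding PLy[OF that] by (intro sum_nonneg mult_nonneg_nonneg) (auto simp: qnn)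
  have PEnn: "0 \<le> PE y" if "y \<le> v" for y
    unfolding PEy[OF that] by (intro sum_nonneg mult_nonneg_nonneg) (auto simp: qnn)
  have S_le: "S y \<le> qtot n q" for y
    unfolding S_def qtot_def
    by (rule sum_mono) (use qpos real_distribution.cdf_bounded_prob[OF RD] in \<open>auto intro: mult_left_le\<close>)
  have pgpos: "0 < 1 - PL y - PE y" if "y \<le> v" for y
    using PLPE[OF that] S_le[of y] assms(6) by linarith
  have fiv: "f 1 v \<le> f i v"
    using i assms(8) by (cases "i = 1") (auto simp: less_imp_le)
  have Epos: "0 < E"
  proof -
    have "(1 - PL v - PE v) ^ N \<le> GG N m (PL v) (PE v) (1 - PL v - PE v)"
      by (rule GG_ge_pg) (use PLnn[of v] PEnn[of v] pgpos[of v] assms(2) in auto)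
    moreover have "0 < (1 - PL v - PE v) ^ N" using pgpos by simp
    ultimately have "0 < sell_prob l m n q v M v" using sp by simp
    moreover have "0 < f i v - c" using fiv assms(10) by simp
    ultimately have "0 < P v" unfolding P_def profit_def by simp
    with le_E show ?thesis by (meson less_le_trans)
  qed
  show "isCont (cdf (M i)) x"
  proof (rule ccontr)
    assume nc: "\<not> isCont (cdf (M i)) x"
    have atom: "measure (M i) {x} > 0"
      using nc Mi.isCont_cdf by (simp add: order_less_le)
    have Px: "E \<le> P x"
    proof (rule ccontr)
      assume "\<not> E \<le> P x" hence lt: "P x < E" by simp
      define g where "g = (\<lambda>z. E - (E - P x) * indicator {x} z :: real)"
      have Pg: "\<And>z. z \<in> space (M i) \<Longrightarrow> P z \<le> g z" using le_E lt by (simp add: g_def indicator_def)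
      have inti: "integrable (M i) (indicator {x} :: real \<Rightarrow> real)"
        by (rule integrable_real_indicator) (auto simp: Mi.emeasure_finite less_top[symmetric])
      have intg: "integrable (M i) g" unfolding g_def
        by (intro Bochner_Integration.integrable_diff integrable_mult_right inti Mi.integrable_const)
      have "E \<le> integral\<^sup>L (M i) g" unfolding E_def by (rule integral_mono[OF intP intg Pg])
      also have "\<dots> = E - (E - P x) * measure (M i) {x}" unfolding g_def
        using inti by (simp add: integral_diff Mi.prob_space[unfolded Mi.space_eq_univ])
      finally have "(E - P x) * measure (M i) {x} \<le> 0" by simp
      with lt atom show False by (simp add: mult_le_0_iff)
    qed
    have xv: "x \<le> v"
    proof (rule ccontr)
      assume "\<not> x \<le> v" hence "P x = 0" unfolding P_def profit_def using sp by simp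
      with Px Epos show False by simp
    qed
    have fx: "c < f i x"
    proof (rule ccontr)
      assume "\<not> c < f i x"
      moreover have "0 \<le> sell_prob l m n q v M x" unfolding sp
        using GG_nonneg[OF PLnn[OF xv] PEnn[OF xv] less_imp_le[OF pgpos[OF xv]]] by simp
      ultimately have "P x \<le> 0" unfolding P_def profit_def by (simp add: mult_le_0_iff)
      with Px Epos show False by simp
    qed
    define y where "y = (\<lambda>k::nat. x - inverse (real (Suc k)))"
    have yx: "y k < x" for k unfolding y_def by simp
    have yv: "y k \<le> v" for k using yx[of k] xv by simp
    have ylim: "y \<longlonglongrightarrow> x" unfolding y_def
      using tendsto_diff[OF tendsto_const LIMSEQ_inverse_real_of_nat] by simp
    have incy: "incseq y" unfolding y_def incseq_def
      by (auto simp: field_simps)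
    have un1: "(\<Union>k. {..<y k}) = {..<x}"
    proof
      show "(\<Union>k. {..<y k}) \<subseteq> {..<x}" using yx by (auto intro: less_trans)
      show "{..<x} \<subseteq> (\<Union>k. {..<y k})"
      proof
        fix z assume "z \<in> {..<x}"
        then have "0 < x - z" by simp
        then obtain k where "inverse (real (Suc k)) < x - z" using reals_Archimedean by blast
        then have "z < y k" unfolding y_def by simp
        then show "z \<in> (\<Union>k. {..<y k})" by blast
      qed
    qed
    have un2: "(\<Union>k. {..y k}) = {..<x}"
    proof
      show "(\<Union>k. {..y k}) \<subseteq> {..<x}" using yx by (auto intro: le_less_trans)
      show "{..<x} \<subseteq> (\<Union>k. {..y k})" using un1 by (auto intro: less_imp_le)
    qed
    have lim1: "(\<lambda>k. measure (M j) {..<y k}) \<longlonglongrightarrow> measure (M j) {..<x}" if j: "j\<in>{1..n}" for j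
    proof -
      interpret Mj: real_distribution "M j" using RD j .
      have "incseq (\<lambda>k. {..<y k})" using incy by (auto simp: incseq_def)
      moreover have "range (\<lambda>k. {..<y k}) \<subseteq> sets (M j)" by auto
      ultimately show ?thesis using Mj.finite_Lim_measure_incseq[of "\<lambda>k. {..<y k}"] unfolding un1 by simp
    qed
    have lim2: "(\<lambda>k. cdf (M j) (y k)) \<longlonglongrightarrow> measure (M j) {..<x}" if j: "j\<in>{1..n}" for j
    proof -
      interpret Mj: real_distribution "M j" using RD j .
      have "incseq (\<lambda>k. {..y k})" using incy by (auto simp: incseq_def)
      moreover have "range (\<lambda>k. {..y k}) \<subseteq> sets (M j)" by auto
      ultimately show ?thesis using Mj.finite_Lim_measure_incseq[of "\<lambda>k. {..y k}"] unfolding un2 cdf_def by simp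
    qed
    have PLlim: "(\<lambda>k. PL (y k)) \<longlonglongrightarrow> PL x"
      unfolding PLy[OF yv] PLy[OF xv] by (intro tendsto_sum tendsto_mult_left lim1) simp
    have Slim: "(\<lambda>k. S (y k)) \<longlonglongrightarrow> PL x"
      unfolding S_def PLy[OF xv] by (intro tendsto_sum tendsto_mult_left lim2) simp
    have PElim: "(\<lambda>k. PE (y k)) \<longlonglongrightarrow> 0"
    proof -
      have "(\<lambda>k. S (y k) - PL (y k)) \<longlonglongrightarrow> PL x - PL x" by (intro tendsto_diff Slim PLlim)
      moreover have "S (y k) - PL (y k) = PE (y k)" for k using PLPE[OF yv[of k]] by simp
      ultimately show ?thesis by simp
    qed
    have pglim: "(\<lambda>k. 1 - PL (y k) - PE (y k)) \<longlonglongrightarrow> 1 - PL x - 0"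
      by (intro tendsto_diff tendsto_const PLlim PElim)
    have flim: "(\<lambda>k. f i (y k)) \<longlonglongrightarrow> f i x"
    proof -
      have "isCont (f i) x" using assms(7) i continuous_on_eq_continuous_at[of UNIV "f i"] by auto
      then show ?thesis using isCont_tendsto_compose ylim by blast
    qed
    define L where "L = (f i x - c) * GG N m (PL x) 0 (1 - PL x)"
    have Plim: "(\<lambda>k. P (y k)) \<longlonglongrightarrow> L"
    proof -
      have "P (y k) = (f i (y k) - c) * GG N m (PL (y k)) (PE (y k)) (1 - PL (y k) - PE (y k))" for k
        unfolding P_def profit_def sp using yv[of k] by simp
      moreover have "(\<lambda>k. (f i (y k) - c) * GG N m (PL (y k)) (PE (y k)) (1 - PL (y k) - PE (y k))) \<longlonglongrightarrow> L"
        unfolding L_def using GG_tendsto[OF PLlim PElim pglim]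
        by (intro tendsto_mult tendsto_diff flim tendsto_const) simp
      ultimately show ?thesis by simp
    qed
    have PEpos: "0 < PE x"
    proof -
      have "q i * measure (M i) {x} \<le> PE x" unfolding PEy[OF xv]
        by (rule member_le_sum[where f="\<lambda>j. q j * measure (M j) {x}"]) (use i qnn in auto)
      moreover have "0 < q i * measure (M i) {x}" using qpos[OF i] atom by simp
      ultimately show ?thesis by linarith
    qed
    have "P x < L"
    proof -
      have "GG N m (PL x) (PE x) (1 - PL x - PE x) < RR N m (PL x) (PE x + (1 - PL x - PE x))"
        by (rule GG_strict) (use PLnn[OF xv] PEpos pgpos[OF xv] assms(1-3) N_def in auto)
      also have "\<dots> \<le> GG N m (PL x) 0 (1 - PL x)"
        using GG_zero_ge[of "PL x" "1 - PL x" N m] PLnn[OF xv] PEnn[OF xv] pgpos[OF xv] by simp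
      finally have "GG N m (PL x) (PE x) (1 - PL x - PE x) < GG N m (PL x) 0 (1 - PL x)" .
      then show ?thesis unfolding L_def P_def profit_def sp using xv fx by simp
    qed
    with Px have "E < L" by simp
    from order_tendstoD(1)[OF Plim this] obtain k where "E < P (y k)"
      by (metis eventually_sequentially order_refl)
    with le_E[of "y k"] show False by simp
  qed
qed

end
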